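(* For every $d\ge 2$, $$\mathsf{SR}+\mathsf{AxThExp}\not\models\neg\exists\mathsf{FTLBody}\quad\text{and}\quad\mathsf{SR}+\mathsf{AxThExp}\not\models\exists\mathsf{FTLBody};$$ that is, both $\mathsf{SR}+\mathsf{AxThExp}+\exists\mathsf{FTLBody}$ and $\mathsf{SR}+\mathsf{AxThExp}+\neg\exists\mathsf{FTLBody}$ have models (indeed with quantity part the ordered field of real numbers).
   Context: Language: two-sorted first-order language with sorts $B$ (bodies), $Q$ (quantities), unary $\mathsf{IOb}$ on $B$, binary $\mathsf{Ph}$ on $B$, operations $+,\cdot$ and relation $\le$ on $Q$, and $(d+2)$-ary $\mathsf{W}$ (first two arguments of sort $B$, rest of sort $Q$). $\Sigma\models\varphi$ means $\varphi$ holds in every model of $\Sigma$. $\mathsf{time}(\bar x,\bar y)=x_1-y_1$, $\mathsf{space}^2(\bar x,\bar y)=\sum_{i=2}^d(x_i-y_i)^2$. Write $\mathsf{ev}_m(\bar x)=\mathsf{ev}_k(\bar y)$ for $\forall b[\mathsf{W}(m,b,\bar x)\leftrightarrow\mathsf{W}(k,b,\bar y)]$. $\mathsf{SR}=\mathsf{SPR}^++\mathsf{AxLight}+\mathsf{AxOField}+\mathsf{AxEv}+\mathsf{AxSelf}+\mathsf{AxSymD}$, where: $\mathsf{SPR}^+$: for every formula $\varphi(h,\bar x)$ with at most one free variable $h$ of sort $B$, $\forall m k\bar x[\mathsf{IOb}(m)\land\mathsf{IOb}(k)\to(\varphi(m,\bar x)\leftrightarrow\varphi(k,\bar x))]$.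 $\mathsf{AxLight}$: $\exists m\,c\,[\mathsf{IOb}(m)\land c>0\land\forall\bar x\bar y\,(\exists p b[\mathsf{Ph}(p,b)\land\mathsf{W}(m,p,\bar x)\land\mathsf{W}(m,p,\bar y)]\leftrightarrow \mathsf{space}^2(\bar x,\bar y)=c^2\mathsf{time}(\bar x,\bar y)^2)]$. $\mathsf{AxOField}$: $\langle Q,+,\cdot,\le\rangle$ is an ordered field. $\mathsf{AxEv}$: $\mathsf{IOb}(m)\land\mathsf{IOb}(k)\to\exists\bar y\,\mathsf{ev}_m(\bar x)=\mathsf{ev}_k(\bar y)$. $\mathsf{AxSelf}$: $\mathsf{IOb}(m)\to\forall\bar x[\mathsf{W}(m,m,\bar x)\leftrightarrow x_2=\dots=x_d=0]$. $\mathsf{AxSymD}$: (i) if $\mathsf{IOb}(m),\mathsf{IOb}(k)$, $x_1=y_1$, $x'_1=y'_1$, $\mathsf{ev}_m(\bar x)=\mathsf{ev}_k(\bar x')$ and $\mathsf{ev}_m(\bar y)=\mathsf{ev}_k(\bar y')$, then $\mathsf{space}^2(\bar x,\bar y)=\mathsf{space}^2(\bar x',\bar y')$; (ii) $\mathsf{IOb}(m)\to\exists pb[\mathsf{Ph}(p,b)\land\mathsf{W}(m,p,0,\dots,0)\land\mathsf{W}(m,p,1,1,0,\dots,0)]$. Speed of light: $\mathsf{c}(m,v)$ is defined by $v>0\land\forall\bar x\bar y(\exists pb[\mathsf{Ph}(p,b)\land\mathsf{W}(m,p,\bar x)\land\mathsf{W}(m,p,\bar y)]\to\mathsf{space}^2(\bar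 x,\bar y)=v^2\mathsf{time}(\bar x,\bar y)^2)$; in models of $\mathsf{SR}$ it has a unique witness $\mathsf{c}_m$ for each inertial $m$. $\mathsf{AxThExp}$: $\exists h\,\mathsf{IOb}(h)\land\forall m\bar x\bar y\,(\mathsf{IOb}(m)\land\mathsf{space}^2(\bar x,\bar y)<\mathsf{c}_m^2\mathsf{time}(\bar x,\bar y)^2\to\exists k[\mathsf{IOb}(k)\land\mathsf{W}(m,k,\bar x)\land\mathsf{W}(m,k,\bar y)])$. $\exists\mathsf{FTLBody}$: $\exists m\,b\,\bar x\,\bar y\,[\mathsf{IOb}(m)\land\mathsf{W}(m,b,\bar x)\land\mathsf{W}(m,b,\bar y)\land\mathsf{space}^2(\bar x,\bar y)>\mathsf{c}_m^2\mathsf{time}(\bar x,\bar y)^2]$. *)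

theory Defs
  imports Main Complex_Main
begin

text \<open>
  Models of the two-sorted language: the quantity sort is the ordered field of
  real numbers (standard +, *, \<le>), so AxOField holds automatically.  A structure is given by
    IOb :: 'b \<Rightarrow> bool,  Ph :: 'b \<Rightarrow> 'b \<Rightarrow> bool,  W :: 'b \<Rightarrow> 'b \<Rightarrow> real list \<Rightarrow> bool,
  where the last argument of W is the d-tuple of coordinates (a list of length d;
  index 0 is time, indices 1..d-1 are space).  Only length-d lists are ever used.
\<close>

section \<open>Syntax and semantics of first-order formulas (needed for the SPR+ schema)\<close>

datatype qterm = QVar nat | QAdd qterm qterm | QMul qterm qterm

datatype form =
    FIOb nat
  | FPh nat nat
  | FW nat nat "qterm list"
  | FLe qterm qterm
  | FEqQ qterm qterm
  | FEqB nat nat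
  | FNot form
  | FAnd form form
  | FExB nat form
  | FExQ nat form

fun qeval :: "(nat \<Rightarrow> real) \<Rightarrow> qterm \<Rightarrow> real" where
  "qeval eQ (QVar n) = eQ n"
| "qeval eQ (QAdd s t) = qeval eQ s + qeval eQ t"
| "qeval eQ (QMul s t) = qeval eQ s * qeval eQ t"

fun sat :: "('b \<Rightarrow> bool) \<Rightarrow> ('b \<Rightarrow> 'b \<Rightarrow> bool) \<Rightarrow> ('b \<Rightarrow> 'b \<Rightarrow> real list \<Rightarrow> bool)
            \<Rightarrow> (nat \<Rightarrow> 'b) \<Rightarrow> (nat \<Rightarrow> real) \<Rightarrow> form \<Rightarrow> bool" where
  "sat IOb Ph W eB eQ (FIOb a) = IOb (eB a)"
| "sat IOb Ph W eB eQ (FPh a b) = Ph (eB a) (eB b)"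
| "sat IOb Ph W eB eQ (FW a b ts) = W (eB a) (eB b) (map (qeval eQ) ts)"
| "sat IOb Ph W eB eQ (FLe s t) = (qeval eQ s \<le> qeval eQ t)"
| "sat IOb Ph W eB eQ (FEqQ s t) = (qeval eQ s = qeval eQ t)"
| "sat IOb Ph W eB eQ (FEqB a b) = (eB a = eB b)"
| "sat IOb Ph W eB eQ (FNot \<phi>) = (\<not> sat IOb Ph W eB eQ \<phi>)"
| "sat IOb Ph W eB eQ (FAnd \<phi> \<psi>) = (sat IOb Ph W eB eQ \<phi> \<and> sat IOb Ph W eB eQ \<psi>)"
| "sat IOb Ph W eB eQ (FExB n \<phi>) = (\<exists>b. sat IOb Ph W (eB(n := b)) eQ \<phi>)"
| "sat IOb Ph W eB eQ (FExQ n \<phi>) = (\<exists>q. sat IOb Ph W eB (eQ(n := q)) \<phi>)"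

fun wf :: "nat \<Rightarrow> form \<Rightarrow> bool" where
  "wf d (FW a b ts) = (length ts = d)"
| "wf d (FNot \<phi>) = wf d \<phi>"
| "wf d (FAnd \<phi> \<psi>) = (wf d \<phi> \<and> wf d \<psi>)"
| "wf d (FExB n \<phi>) = wf d \<phi>"
| "wf d (FExQ n \<phi>) = wf d \<phi>"
| "wf d _ = True"

fun freeB :: "form \<Rightarrow> nat set" where
  "freeB (FIOb a) = {a}"
| "freeB (FPh a b) = {a, b}"
| "freeB (FW a b ts) = {a, b}"
| "freeB (FLe s t) = {}"
| "freeB (FEqQ s t) = {}"
| "freeB (FEqB a b) = {a, b}"
| "freeB (FNot \<phi>) = freeB \<phi>"
| "freeB (FAnd \<phi> \<psi>) = freeB \<phi> \<union> freeB \<psi>"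
| "freeB (FExB n \<phi>) = freeB \<phi> - {n}"
| "freeB (FExQ n \<phi>) = freeB \<phi>"

definition time :: "real list \<Rightarrow> real list \<Rightarrow> real" where
  "time x y = x ! 0 - y ! 0"

definition space2 :: "nat \<Rightarrow> real list \<Rightarrow> real list \<Rightarrow> real" where
  "space2 d x y = (\<Sum>i\<in>{1..<d}. (x ! i - y ! i)\<^sup>2)"

definition same_ev :: "('b \<Rightarrow> 'b \<Rightarrow> real list \<Rightarrow> bool) \<Rightarrow> 'b \<Rightarrow> real list \<Rightarrow> 'b \<Rightarrow> real list \<Rightarrow> bool" where
  "same_ev W m x k y = (\<forall>b. W m b x \<longleftrightarrow> W k b y)"

definition SPRplus :: "nat \<Rightarrow> ('b \<Rightarrow> bool) \<Rightarrow> ('b \<Rightarrow> 'b \<Rightarrow> bool) \<Rightarrow> ('b \<Rightarrow> 'b \<Rightarrow> real list \<Rightarrow> bool) \<Rightarrow> bool" where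
  "SPRplus d IOb Ph W =
    (\<forall>\<phi> h. wf d \<phi> \<and> freeB \<phi> \<subseteq> {h} \<longrightarrow>
       (\<forall>eB eQ m k. IOb m \<and> IOb k \<longrightarrow>
          (sat IOb Ph W (eB(h := m)) eQ \<phi> \<longleftrightarrow> sat IOb Ph W (eB(h := k)) eQ \<phi>)))"

definition AxLight :: "nat \<Rightarrow> ('b \<Rightarrow> bool) \<Rightarrow> ('b \<Rightarrow> 'b \<Rightarrow> bool) \<Rightarrow> ('b \<Rightarrow> 'b \<Rightarrow> real list \<Rightarrow> bool) \<Rightarrow> bool" where
  "AxLight d IOb Ph W =
    (\<exists>m c. IOb m \<and> c > 0 \<and>
      (\<forall>x y. length x = d \<and> length y = d \<longrightarrow>
         ((\<exists>p b. Ph p b \<and> W m p x \<and> W m p y) \<longleftrightarrow> space2 d x y = c\<^sup>2 * (time x y)\<^sup>2)))"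

definition AxEv :: "nat \<Rightarrow> ('b \<Rightarrow> bool) \<Rightarrow> ('b \<Rightarrow> 'b \<Rightarrow> real list \<Rightarrow> bool) \<Rightarrow> bool" where
  "AxEv d IOb W =
    (\<forall>m k x. IOb m \<and> IOb k \<and> length x = d \<longrightarrow> (\<exists>y. length y = d \<and> same_ev W m x k y))"

definition AxSelf :: "nat \<Rightarrow> ('b \<Rightarrow> bool) \<Rightarrow> ('b \<Rightarrow> 'b \<Rightarrow> real list \<Rightarrow> bool) \<Rightarrow> bool" where
  "AxSelf d IOb W =
    (\<forall>m. IOb m \<longrightarrow> (\<forall>x. length x = d \<longrightarrow> (W m m x \<longleftrightarrow> (\<forall>i\<in>{1..<d}. x ! i = 0))))"

definition AxSymD :: "nat \<Rightarrow> ('b \<Rightarrow> bool) \<Rightarrow> ('b \<Rightarrow> 'b \<Rightarrow> bool) \<Rightarrow> ('b \<Rightarrow> 'b \<Rightarrow> real list \<Rightarrow> bool) \<Rightarrow> bool" where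
  "AxSymD d IOb Ph W =
    ((\<forall>m k x y x' y'. IOb m \<and> IOb k \<and>
        length x = d \<and> length y = d \<and> length x' = d \<and> length y' = d \<and>
        x ! 0 = y ! 0 \<and> x' ! 0 = y' ! 0 \<and>
        same_ev W m x k x' \<and> same_ev W m y k y' \<longrightarrow>
        space2 d x y = space2 d x' y') \<and>
     (\<forall>m. IOb m \<longrightarrow>
        (\<exists>p b. Ph p b \<and> W m p (replicate d 0) \<and> W m p (1 # 1 # replicate (d - 2) 0))))"

definition SR :: "nat \<Rightarrow> ('b \<Rightarrow> bool) \<Rightarrow> ('b \<Rightarrow> 'b \<Rightarrow> bool) \<Rightarrow> ('b \<Rightarrow> 'b \<Rightarrow> real list \<Rightarrow> bool) \<Rightarrow> bool" where
  "SR d IOb Ph W =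
    (SPRplus d IOb Ph W \<and> AxLight d IOb Ph W \<and> AxEv d IOb W \<and> AxSelf d IOb W \<and> AxSymD d IOb Ph W)"
  \<comment> \<open>AxOField holds automatically since the quantity part is the real field.\<close>

text \<open>The formula c(m,v) and the speed of light c_m (its unique witness in models of SR).\<close>
definition is_c :: "nat \<Rightarrow> ('b \<Rightarrow> 'b \<Rightarrow> bool) \<Rightarrow> ('b \<Rightarrow> 'b \<Rightarrow> real list \<Rightarrow> bool) \<Rightarrow> 'b \<Rightarrow> real \<Rightarrow> bool" where
  "is_c d Ph W m v =
    (v > 0 \<and> (\<forall>x y. length x = d \<and> length y = d \<longrightarrow>
        (\<exists>p b. Ph p b \<and> W m p x \<and> W m p y) \<longrightarrow> space2 d x y = v\<^sup>2 * (time x y)\<^sup>2))"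

definition c_of :: "nat \<Rightarrow> ('b \<Rightarrow> 'b \<Rightarrow> bool) \<Rightarrow> ('b \<Rightarrow> 'b \<Rightarrow> real list \<Rightarrow> bool) \<Rightarrow> 'b \<Rightarrow> real" where
  "c_of d Ph W m = (THE v. is_c d Ph W m v)"

definition AxThExp :: "nat \<Rightarrow> ('b \<Rightarrow> bool) \<Rightarrow> ('b \<Rightarrow> 'b \<Rightarrow> bool) \<Rightarrow> ('b \<Rightarrow> 'b \<Rightarrow> real list \<Rightarrow> bool) \<Rightarrow> bool" where
  "AxThExp d IOb Ph W =
    ((\<exists>h. IOb h) \<and>
     (\<forall>m x y. IOb m \<and> length x = d \<and> length y = d \<and>
        space2 d x y < (c_of d Ph W m)\<^sup>2 * (time x y)\<^sup>2 \<longrightarrow>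
        (\<exists>k. IOb k \<and> W m k x \<and> W m k y)))"

definition ExFTLBody :: "nat \<Rightarrow> ('b \<Rightarrow> bool) \<Rightarrow> ('b \<Rightarrow> 'b \<Rightarrow> bool) \<Rightarrow> ('b \<Rightarrow> 'b \<Rightarrow> real list \<Rightarrow> bool) \<Rightarrow> bool" where
  "ExFTLBody d IOb Ph W =
    (\<exists>m b x y. IOb m \<and> length x = d \<and> length y = d \<and> W m b x \<and> W m b y \<and>
        space2 d x y > (c_of d Ph W m)\<^sup>2 * (time x y)\<^sup>2)"

end

theory Submission
  imports Defs
begin


definition Bf :: "nat \<Rightarrow> (nat \<Rightarrow> real) \<Rightarrow> (nat \<Rightarrow> real) \<Rightarrow> real" where
  "Bf d f g = f 0 * g 0 - (\<Sum>i\<in>{1..<d}. f i * g i)"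

definition vec :: "nat \<Rightarrow> (nat \<Rightarrow> real) \<Rightarrow> real list" where
  "vec d f = map f [0..<d]"

definition Ld :: "nat \<Rightarrow> real list set" where "Ld d = {x. length x = d}"

definition mq :: "nat \<Rightarrow> real list \<Rightarrow> real list \<Rightarrow> real" where
  "mq d x y = (x!0 - y!0)\<^sup>2 - space2 d x y"

lemma vec_len[simp]: "length (vec d f) = d" by (simp add: vec_def)
lemma vec_nth[simp]: "i < d \<Longrightarrow> vec d f ! i = f i" by (simp add: vec_def)

lemma mq_Bf: "mq d x y = Bf d (\<lambda>i. x!i - y!i) (\<lambda>i. x!i - y!i)"
  by (simp add: mq_def Bf_def space2_def power2_eq_square)

lemma Bf_cong: "0 < d \<Longrightarrow> (\<And>i. i < d \<Longrightarrow> f i = f' i) \<Longrightarrow> (\<And>i. i < d \<Longrightarrow> g i = g' i) \<Longrightarrow>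
   Bf d f g = Bf d f' g'"
  unfolding Bf_def by (auto intro!: sum.cong)

lemma Bf_sym: "Bf d f g = Bf d g f"
  unfolding Bf_def by (simp add: mult.commute)

lemma Bf_lin1: "Bf d (\<lambda>i. f i + c * g i) h = Bf d f h + c * Bf d g h"
  unfolding Bf_def by (simp add: algebra_simps sum.distrib sum_distrib_left)

lemma Bf_lin1m: "Bf d (\<lambda>i. f i - c * g i) h = Bf d f h - c * Bf d g h"
  unfolding Bf_def by (simp add: algebra_simps sum.distrib sum_distrib_left sum_subtractf)

lemma Bf_quad: "Bf d (\<lambda>i. f i - c * g i) (\<lambda>i. f i - c * g i) = Bf d f f - 2 * c * Bf d f g + c\<^sup>2 * Bf d g g"
  unfolding Bf_def by (simp add: algebra_simps sum.distrib sum_distrib_left sum_subtractf power2_eq_square)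

definition Gs :: "nat \<Rightarrow> (real list \<Rightarrow> real list) set" where
  "Gs d = {g. (\<forall>x. length x \<noteq> d \<longrightarrow> g x = x) \<and> bij_betw g (Ld d) (Ld d) \<and>
      (\<forall>x\<in>Ld d. \<forall>y\<in>Ld d. mq d (g x) (g y) = mq d x y)}"

lemma G_len: "g \<in> Gs d \<Longrightarrow> length (g x) = d \<longleftrightarrow> length x = d"
  unfolding Gs_def Ld_def bij_betw_def by force

lemma G_fix: "g \<in> Gs d \<Longrightarrow> length x \<noteq> d \<Longrightarrow> g x = x"
  unfolding Gs_def by auto

lemma G_mq: "g \<in> Gs d \<Longrightarrow> length x = d \<Longrightarrow> length y = d \<Longrightarrow> mq d (g x) (g y) = mq d x y"
  unfolding Gs_def Ld_def by auto

lemma G_inj: assumes "g \<in> Gs d" shows "inj g"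
proof (rule injI)
  fix x y assume e: "g x = g y"
  have bb: "inj_on g (Ld d)" using assms unfolding Gs_def bij_betw_def by auto
  have lx: "length (g x) = d \<longleftrightarrow> length x = d" by (rule G_len[OF assms])
  have ly: "length (g y) = d \<longleftrightarrow> length y = d" by (rule G_len[OF assms])
  show "x = y"
  proof (cases "length x = d")
    case True
    have "length y = d" using True e lx ly by metis
    then show ?thesis using True inj_onD[OF bb e] unfolding Ld_def by blast
  next
    case False
    have "length y \<noteq> d" using False e lx ly by metis
    then have gy: "g y = y" by (rule G_fix[OF assms])
    have gx: "g x = x" using False by (rule G_fix[OF assms])
    have "x = g x" using gx by simp
    also have "\<dots> = g y" by (rule e)
    also have "\<dots> = y" by (rule gy)
    finally show ?thesis .
  qed
qed

lemma G_surj: assumes "g \<in> Gs d" shows "surj g"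
  unfolding surj_def
proof
  fix z
  have bb: "g ` Ld d = Ld d" using assms unfolding Gs_def bij_betw_def by auto
  show "\<exists>x. z = g x"
  proof (cases "length z = d")
    case True
    then have "z \<in> g ` Ld d" using bb unfolding Ld_def by simp
    then show ?thesis by blast
  next
    case False then have "g z = z" by (rule G_fix[OF assms])
    then show ?thesis by (intro exI[of _ z]) simp
  qed
qed

lemma G_bij: "g \<in> Gs d \<Longrightarrow> bij g" by (simp add: bij_def G_inj G_surj)

lemma G_comp: assumes "g \<in> Gs d" "h \<in> Gs d" shows "g \<circ> h \<in> Gs d"
proof -
  have "bij_betw (g \<circ> h) (Ld d) (Ld d)" using assms unfolding Gs_def
    by (auto intro: bij_betw_trans)
  moreover have "\<forall>x. length x \<noteq> d \<longrightarrow> (g \<circ> h) x = x" using G_fix[OF assms(1)] G_fix[OF assms(2)] by simp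
  moreover have "\<forall>x\<in>Ld d. \<forall>y\<in>Ld d. mq d ((g \<circ> h) x) ((g \<circ> h) y) = mq d x y"
    by (simp add: Ld_def G_mq[OF assms(1)] G_mq[OF assms(2)] G_len[OF assms(2)])
  ultimately show ?thesis unfolding Gs_def by blast
qed

lemma G_inv: assumes "g \<in> Gs d" shows "inv g \<in> Gs d"
proof -
  have bj: "bij g" using G_bij assms by blast
  have gi: "g (inv g z) = z" for z using bj by (simp add: bij_is_surj surj_f_inv_f)
  have ig: "inv g (g z) = z" for z using bj by (simp add: bij_is_inj)
  have len: "length (inv g z) = d \<longleftrightarrow> length z = d" for z
    using G_len[OF assms, of "inv g z"] gi by simp
  have B: "bij_betw (inv g) (Ld d) (Ld d)"
  proof (rule bij_betw_byWitness[where f'=g])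
    show "inv g ` Ld d \<subseteq> Ld d" using len unfolding Ld_def by auto
    show "g ` Ld d \<subseteq> Ld d" using G_len[OF assms] unfolding Ld_def by auto
  qed (auto simp: gi ig)
  have A: "\<forall>x. length x \<noteq> d \<longrightarrow> inv g x = x"
  proof (intro allI impI)
    fix x :: "real list" assume "length x \<noteq> d" then have "g x = x" by (rule G_fix[OF assms])
    then show "inv g x = x" using ig[of x] by simp
  qed
  have C: "\<forall>x\<in>Ld d. \<forall>y\<in>Ld d. mq d (inv g x) (inv g y) = mq d x y"
  proof (intro ballI)
    fix x y assume "x \<in> Ld d" "y \<in> Ld d"
    then have l: "length (inv g x) = d" "length (inv g y) = d" using len unfolding Ld_def by auto
    have "mq d x y = mq d (g (inv g x)) (g (inv g y))" by (simp add: gi)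
    also have "\<dots> = mq d (inv g x) (inv g y)" using G_mq[OF assms l] .
    finally show "mq d (inv g x) (inv g y) = mq d x y" by simp
  qed
  show ?thesis unfolding Gs_def by (rule CollectI) (rule conjI[OF A conjI[OF B C]])
qed

lemma G_id: "(\<lambda>x. x) \<in> Gs d"
proof -
  have "bij_betw (\<lambda>x. x) (Ld d) (Ld d)" using bij_betw_id[of "Ld d"] by (simp add: id_def)
  then show ?thesis unfolding Gs_def mem_Collect_eq by (intro conjI) auto
qed



definition sc :: "nat \<Rightarrow> (nat \<Rightarrow> real) \<Rightarrow> (nat \<Rightarrow> real) \<Rightarrow> real" where
  "sc d n f = 2 * Bf d f n / Bf d n n"

definition kmap :: "nat \<Rightarrow> real list \<Rightarrow> (nat \<Rightarrow> real) \<Rightarrow> real list \<Rightarrow> real list" where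
  "kmap d p n x = (if length x = d then vec d (\<lambda>i. p!i + x!i - sc d n (nth x) * n i) else x)"

definition kinv :: "nat \<Rightarrow> real list \<Rightarrow> (nat \<Rightarrow> real) \<Rightarrow> real list \<Rightarrow> real list" where
  "kinv d p n z = (if length z = d then vec d (\<lambda>i. (z!i - p!i) - sc d n (\<lambda>j. z!j - p!j) * n i) else z)"

lemma sc_lin: assumes "Bf d n n \<noteq> 0"
  shows "sc d n (\<lambda>i. f i - c * n i) = sc d n f - 2 * c"
  using assms unfolding sc_def by (simp add: Bf_lin1m field_simps)

lemma kmap_len[simp]: "length (kmap d p n x) = length x" by (simp add: kmap_def)
lemma kinv_len[simp]: "length (kinv d p n x) = length x" by (simp add: kinv_def)
lemma kmap_nth: "length x = d \<Longrightarrow> i < d \<Longrightarrow> kmap d p n x ! i = p!i + x!i - sc d n (nth x) * n i"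
  by (simp add: kmap_def)
lemma kinv_nth: "length x = d \<Longrightarrow> i < d \<Longrightarrow> kinv d p n x ! i = (x!i - p!i) - sc d n (\<lambda>j. x!j - p!j) * n i"
  by (simp add: kinv_def)

lemma sc_cong: "0 < d \<Longrightarrow> (\<And>i. i < d \<Longrightarrow> f i = f' i) \<Longrightarrow> sc d n f = sc d n f'"
  unfolding sc_def using Bf_cong[of d f f' n n] by simp

lemma kinv_kmap: assumes "0 < d" "Bf d n n \<noteq> 0" "length x = d"
  shows "kinv d p n (kmap d p n x) = x"
proof -
  let ?s = "sc d n (nth x)"
  have "sc d n (\<lambda>j. kmap d p n x ! j - p ! j) = sc d n (\<lambda>j. x!j - ?s * n j)"
    using assms by (intro sc_cong) (auto simp: kmap_nth)
  also have "\<dots> = - ?s" using sc_lin[OF assms(2)] by simp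
  finally have e: "sc d n (\<lambda>j. kmap d p n x ! j - p ! j) = - ?s" .
  show ?thesis
    by (rule nth_equalityI) (auto simp: kinv_nth e assms kmap_nth)
qed

lemma kmap_kinv: assumes "0 < d" "Bf d n n \<noteq> 0" "length z = d"
  shows "kmap d p n (kinv d p n z) = z"
proof -
  let ?s = "sc d n (\<lambda>j. z!j - p!j)"
  have "sc d n (nth (kinv d p n z)) = sc d n (\<lambda>j. (z!j - p!j) - ?s * n j)"
    using assms by (intro sc_cong) (auto simp: kinv_nth)
  also have "\<dots> = - ?s" using sc_lin[OF assms(2)] by simp
  finally have e: "sc d n (nth (kinv d p n z)) = - ?s" .
  show ?thesis
    by (rule nth_equalityI) (auto simp: kinv_nth e assms kmap_nth)
qed

lemma kmap_mq: assumes "0 < d" "Bf d n n \<noteq> 0" "length x = d" "length y = d"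
  shows "mq d (kmap d p n x) (kmap d p n y) = mq d x y"
proof -
  let ?f = "\<lambda>i. x!i - y!i"
  let ?c = "sc d n (nth x) - sc d n (nth y)"
  have c: "?c = 2 * Bf d ?f n / Bf d n n"
    unfolding sc_def using Bf_lin1m[of d "nth x" 1 "nth y" n] by (simp add: diff_divide_distrib)
  have "mq d (kmap d p n x) (kmap d p n y) = Bf d (\<lambda>i. ?f i - ?c * n i) (\<lambda>i. ?f i - ?c * n i)"
    unfolding mq_Bf using assms by (intro Bf_cong) (auto simp: kmap_def algebra_simps)
  also have "\<dots> = Bf d ?f ?f - 2 * ?c * Bf d ?f n + ?c\<^sup>2 * Bf d n n" by (rule Bf_quad)
  also have "\<dots> = Bf d ?f ?f" using assms(2) unfolding c by (simp add: field_simps power2_eq_square)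
  finally show ?thesis by (simp add: mq_Bf)
qed

lemma kmap_G: assumes "0 < d" "Bf d n n \<noteq> 0"
  shows "kmap d p n \<in> Gs d"
proof -
  have A: "\<forall>x. length x \<noteq> d \<longrightarrow> kmap d p n x = x" by (simp add: kmap_def)
  have B: "bij_betw (kmap d p n) (Ld d) (Ld d)"
  proof (rule bij_betw_byWitness[where f'="kinv d p n"])
    show "kmap d p n ` Ld d \<subseteq> Ld d" by (auto simp: Ld_def kmap_def)
    show "kinv d p n ` Ld d \<subseteq> Ld d" by (auto simp: Ld_def kinv_def)
  qed (auto simp: Ld_def kinv_kmap kmap_kinv assms)
  have C: "\<forall>x\<in>Ld d. \<forall>y\<in>Ld d. mq d (kmap d p n x) (kmap d p n y) = mq d x y"
    using kmap_mq[OF assms] by (simp add: Ld_def)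
  show ?thesis unfolding Gs_def by (rule CollectI) (rule conjI[OF A conjI[OF B C]])
qed



definition te :: "nat \<Rightarrow> real \<Rightarrow> real list" where "te d t = t # replicate (d - 1) 0"
definition trace :: "nat \<Rightarrow> (real list \<Rightarrow> real list) \<Rightarrow> real list set" where
  "trace d b = range (\<lambda>t. b (te d t))"

lemma te_len[simp]: "0 < d \<Longrightarrow> length (te d t) = d" by (simp add: te_def)
lemma te_nth0[simp]: "te d t ! 0 = t" by (simp add: te_def)
lemma te_nth: "0 < i \<Longrightarrow> i < d \<Longrightarrow> te d t ! i = 0" by (simp add: te_def nth_Cons')

lemma Bf_te: "Bf d (nth (te d t)) n = t * n 0"
  unfolding Bf_def by (simp add: te_nth)

lemma Bf_e0: "Bf d (\<lambda>i. if i = 0 then a else 0) g = a * g 0"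
  unfolding Bf_def by simp

lemma thexp_obs:
  assumes d: "0 < d" and lp: "length p = d" and lq: "length q = d" and Q: "mq d q p > 0"
  shows "\<exists>k\<in>Gs d. p \<in> trace d k \<and> q \<in> trace d k"
proof -
  define \<delta> where "\<delta> = (\<lambda>i. q!i - p!i)"
  define Qv where "Qv = Bf d \<delta> \<delta>"
  have Qv: "Qv > 0" using Q unfolding Qv_def \<delta>_def mq_Bf .
  have "Qv \<le> (\<delta> 0)\<^sup>2" unfolding Qv_def Bf_def by (simp add: power2_eq_square[symmetric] sum_nonneg)
  then have d0: "\<delta> 0 \<noteq> 0" using Qv by auto
  define l where "l = (if \<delta> 0 > 0 then - sqrt Qv else sqrt Qv)"
  have l2: "l * l = Qv" using Qv unfolding l_def by auto
  have sq: "sqrt Qv > 0" using Qv by simp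
  have ld: "l * \<delta> 0 < 0" using d0 sq unfolding l_def
    by (auto simp: mult_neg_pos mult_pos_neg mult_pos_pos)
  have l0: "l \<noteq> 0" using sq unfolding l_def by auto
  define e where "e = (\<lambda>i::nat. if i = 0 then l else 0)"
  define n where "n = (\<lambda>i. e i - 1 * \<delta> i)"
  have N: "Bf d n n = 2 * l * (l - \<delta> 0)"
  proof -
    have "Bf d n n = Bf d e e - 2 * 1 * Bf d e \<delta> + 1\<^sup>2 * Bf d \<delta> \<delta>"
      unfolding n_def by (rule Bf_quad)
    also have "\<dots> = l * l - 2 * l * \<delta> 0 + Qv" unfolding e_def Bf_e0 Qv_def by simp
    finally show ?thesis using l2 by (simp add: algebra_simps)
  qed
  have Nnz: "Bf d n n \<noteq> 0" unfolding N using ld l0 by (auto simp: algebra_simps)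
  have lmd: "l - \<delta> 0 \<noteq> 0" using N Nnz by auto
  have kt: "kmap d p n (te d t) = vec d (\<lambda>i. p!i + (t / l) * \<delta> i)" for t
  proof (rule nth_equalityI)
    show "length (kmap d p n (te d t)) = length (vec d (\<lambda>i. p ! i + t / l * \<delta> i))" using d by simp
    have s: "sc d n (nth (te d t)) = t / l"
      unfolding sc_def Bf_te N using l0 lmd by (simp add: n_def e_def field_simps)
    fix i assume "i < length (kmap d p n (te d t))"
    then have i: "i < d" using d by simp
    have "kmap d p n (te d t) ! i = p!i + te d t ! i - t / l * n i"
      using i d by (simp add: kmap_nth s)
    then show "kmap d p n (te d t) ! i = vec d (\<lambda>i. p ! i + t / l * \<delta> i) ! i"
      using i d l0 by (cases "i = 0") (auto simp: te_nth n_def e_def field_simps)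
  qed
  have "p = kmap d p n (te d 0)" unfolding kt using lp by (intro nth_equalityI) auto
  moreover have "q = kmap d p n (te d l)" unfolding kt using lq lp l0 by (intro nth_equalityI) (auto simp: \<delta>_def)
  ultimately show ?thesis using kmap_G[OF d Nnz] unfolding trace_def by blast
qed



definition IObM :: "nat \<Rightarrow> (real list \<Rightarrow> real list) \<Rightarrow> bool" where "IObM d b = (b \<in> Gs d)"
definition PhM :: "nat \<Rightarrow> (real list \<Rightarrow> real list) \<Rightarrow> (real list \<Rightarrow> real list) \<Rightarrow> bool" where
  "PhM d p b = (\<forall>u\<in>trace d p \<inter> Ld d. \<forall>w\<in>trace d p \<inter> Ld d. mq d u w = 0)"
definition Caus :: "nat \<Rightarrow> (real list \<Rightarrow> real list) \<Rightarrow> bool" where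
  "Caus d b = (\<forall>u\<in>trace d b \<inter> Ld d. \<forall>w\<in>trace d b \<inter> Ld d. 0 \<le> mq d u w)"
definition WM :: "nat \<Rightarrow> ((real list \<Rightarrow> real list) \<Rightarrow> bool) \<Rightarrow> (real list \<Rightarrow> real list) \<Rightarrow> (real list \<Rightarrow> real list) \<Rightarrow> real list \<Rightarrow> bool" where
  "WM d P m b x = (m \<in> Gs d \<and> P b \<and> m x \<in> trace d b)"
definition line :: "nat \<Rightarrow> real list \<Rightarrow> real list \<Rightarrow> real list \<Rightarrow> real list" where
  "line d a b = (\<lambda>z. vec d (\<lambda>i. a!i + z!0 * (b!i - a!i)))"

lemma mq_sym: "mq d x y = mq d y x"
  unfolding mq_def space2_def by (simp add: power2_commute)

lemma trace_comp: assumes "H \<in> Gs d" shows "trace d (H \<circ> b) \<inter> Ld d = H ` (trace d b \<inter> Ld d)"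
  using G_len[OF assms] unfolding trace_def Ld_def by auto

lemma forall_image: assumes "H \<in> Gs d" "A \<subseteq> Ld d"
  shows "(\<forall>u\<in>H`A. \<forall>w\<in>H`A. R (mq d u w)) = (\<forall>u\<in>A. \<forall>w\<in>A. R (mq d u w))"
proof -
  have "\<forall>u\<in>A. \<forall>w\<in>A. mq d (H u) (H w) = mq d u w" using assms G_mq unfolding Ld_def by blast
  then show ?thesis by auto
qed

lemma PhM_comp: "H \<in> Gs d \<Longrightarrow> PhM d (H \<circ> p) b' = PhM d p b"
  unfolding PhM_def trace_comp by (rule forall_image) auto

lemma Caus_comp: "H \<in> Gs d \<Longrightarrow> Caus d (H \<circ> p) = Caus d p"
  unfolding Caus_def trace_comp by (rule forall_image) auto

lemma line_trace: assumes "0 < d"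
  shows "trace d (line d a b) = {vec d (\<lambda>i. a!i + t * (b!i - a!i)) | t. True}"
  using assms unfolding trace_def line_def by auto

lemma line_mq: assumes "0 < d" "u \<in> trace d (line d a b)" "w \<in> trace d (line d a b)"
  shows "\<exists>c. mq d u w = c * mq d b a"
proof -
  obtain s t where u: "u = vec d (\<lambda>i. a!i + s * (b!i - a!i))" and w: "w = vec d (\<lambda>i. a!i + t * (b!i - a!i))"
    using assms line_trace by auto
  have "mq d u w = Bf d (\<lambda>i. (s - t) * (b!i - a!i)) (\<lambda>i. (s - t) * (b!i - a!i))"
    unfolding mq_Bf u w using assms(1) by (intro Bf_cong) (auto simp: algebra_simps)
  also have "\<dots> = (s - t)\<^sup>2 * mq d b a"
    unfolding mq_Bf Bf_def by (simp add: power2_eq_square sum_distrib_left algebra_simps)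
  finally show ?thesis by blast
qed

lemma line_a: "length a = d \<Longrightarrow> 0 < d \<Longrightarrow> a \<in> trace d (line d a b)"
  unfolding line_trace by (auto intro!: exI[of _ 0] nth_equalityI)

lemma line_b: "length a = d \<Longrightarrow> length b = d \<Longrightarrow> 0 < d \<Longrightarrow> b \<in> trace d (line d a b)"
  unfolding line_trace by (auto intro!: exI[of _ 1] nth_equalityI)

lemma line_Ld: "0 < d \<Longrightarrow> trace d (line d a b) \<subseteq> Ld d"
  unfolding line_trace by (auto simp: Ld_def)

lemma line_Ph: assumes "0 < d" "mq d b a = 0" shows "PhM d (line d a b) b'"
  unfolding PhM_def using line_mq[OF assms(1)] assms(2) by fastforce

lemma line_Caus: assumes "0 < d" "mq d b a = 0" shows "Caus d (line d a b)"
  unfolding Caus_def using line_mq[OF assms(1)] assms(2) by fastforce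

lemma te_mq: "0 < d \<Longrightarrow> mq d (te d s) (te d t) = (s - t)\<^sup>2"
  unfolding mq_def space2_def by (simp add: te_nth)

lemma G_Caus: assumes "g \<in> Gs d" "0 < d" shows "Caus d g"
proof -
  have "Caus d (g \<circ> (\<lambda>x. x))" unfolding Caus_comp[OF assms(1)]
    unfolding Caus_def trace_def using assms(2) by (auto simp: te_mq Ld_def)
  then show ?thesis by (simp add: comp_def)
qed

lemma const_Caus: "Caus d (\<lambda>_. c)"
  unfolding Caus_def trace_def by (auto simp: mq_def space2_def)


lemma sat_free:
  "(\<forall>n\<in>freeB \<phi>. eB n = eB' n) \<Longrightarrow> sat IOb Ph W eB eQ \<phi> = sat IOb Ph W eB' eQ \<phi>"
proof (induction \<phi> arbitrary: eB eB' eQ)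
  case (FExB n \<phi>)
  have "\<And>b. sat IOb Ph W (eB(n:=b)) eQ \<phi> = sat IOb Ph W (eB'(n:=b)) eQ \<phi>"
    by (rule FExB.IH) (use FExB.prems in auto)
  then show ?case by simp
next
  case (FAnd \<phi>1 \<phi>2)
  have "sat IOb Ph W eB eQ \<phi>1 = sat IOb Ph W eB' eQ \<phi>1"
    by (rule FAnd.IH(1)) (use FAnd.prems in auto)
  moreover have "sat IOb Ph W eB eQ \<phi>2 = sat IOb Ph W eB' eQ \<phi>2"
    by (rule FAnd.IH(2)) (use FAnd.prems in auto)
  ultimately show ?case by simp
next
  case (FNot \<phi>)
  have "sat IOb Ph W eB eQ \<phi> = sat IOb Ph W eB' eQ \<phi>"
    by (rule FNot.IH) (use FNot.prems in auto)
  then show ?case by simp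
next
  case (FExQ n \<phi>)
  have "\<And>q. sat IOb Ph W eB (eQ(n:=q)) \<phi> = sat IOb Ph W eB' (eQ(n:=q)) \<phi>"
    by (rule FExQ.IH) (use FExQ.prems in auto)
  then show ?case by simp
qed auto

lemma sat_auto:
  assumes "bij \<sigma>" "\<And>b. IOb (\<sigma> b) = IOb b" "\<And>a b. Ph (\<sigma> a) (\<sigma> b) = Ph a b"
    "\<And>a b x. W (\<sigma> a) (\<sigma> b) x = W a b x"
  shows "sat IOb Ph W (\<sigma> \<circ> eB) eQ \<phi> = sat IOb Ph W eB eQ \<phi>"
proof (induction \<phi> arbitrary: eB eQ)
  case (FEqB a b)
  then show ?case using assms(1) by (simp add: bij_def inj_eq)
next
  case (FExB n \<phi>)
  have "(\<exists>b. sat IOb Ph W ((\<sigma> \<circ> eB)(n := b)) eQ \<phi>) = (\<exists>b. sat IOb Ph W ((\<sigma> \<circ> eB)(n := \<sigma> b)) eQ \<phi>)"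
    using assms(1) by (metis bij_pointE)
  also have "\<dots> = (\<exists>b. sat IOb Ph W (\<sigma> \<circ> (eB(n := b))) eQ \<phi>)"
    by (simp only: fun_upd_comp)
  also have "\<dots> = (\<exists>b. sat IOb Ph W (eB(n := b)) eQ \<phi>)" by (simp only: FExB.IH)
  finally show ?case by (simp only: sat.simps)
qed (auto simp: assms)


locale mdl =
  fixes d :: nat and P :: "(real list \<Rightarrow> real list) \<Rightarrow> bool"
  assumes d: "2 \<le> d"
  and P1: "\<And>H b. H \<in> Gs d \<Longrightarrow> P (H \<circ> b) = P b"
  and P2: "\<And>g. g \<in> Gs d \<Longrightarrow> P g"
  and P3: "\<And>c. P (\<lambda>_. c)"
  and P4: "\<And>a b. length a = d \<Longrightarrow> length b = d \<Longrightarrow> mq d b a = 0 \<Longrightarrow> P (line d a b)"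
begin

lemma d0: "0 < d" using d by simp

lemma SPR: "SPRplus d (IObM d) (PhM d) (WM d P)"
  unfolding SPRplus_def
proof (intro allI impI)
  fix \<phi> h eB eQ m k
  assume fr: "wf d \<phi> \<and> freeB \<phi> \<subseteq> {h}" and mk: "IObM d m \<and> IObM d k"
  have mG: "m \<in> Gs d" and kG: "k \<in> Gs d" using mk unfolding IObM_def by auto
  define H where "H = k \<circ> inv m"
  have HG: "H \<in> Gs d" unfolding H_def by (rule G_comp[OF kG G_inv[OF mG]])
  have injH: "inj H" by (rule G_inj[OF HG])
  have bjH: "bij H" by (rule G_bij[OF HG])
  define \<sigma> :: "(real list \<Rightarrow> real list) \<Rightarrow> (real list \<Rightarrow> real list)" where "\<sigma> = (\<lambda>b. H \<circ> b)"
  have sm: "\<sigma> m = k" unfolding \<sigma>_def H_def using G_inj[OF mG] by (simp add: o_assoc)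
  have bs: "bij \<sigma>"
  proof (rule bij_betw_byWitness[where f'="\<lambda>b. inv H \<circ> b"])
    show "\<forall>a\<in>UNIV. inv H \<circ> \<sigma> a = a" unfolding \<sigma>_def using injH by (simp add: o_assoc)
    show "\<forall>a\<in>UNIV. \<sigma> (inv H \<circ> a) = a" unfolding \<sigma>_def using bjH
      by (auto simp: fun_eq_iff bij_is_surj surj_f_inv_f)
  qed auto
  have i1: "IObM d (\<sigma> b) = IObM d b" for b
  proof
    assume "IObM d (\<sigma> b)"
    then have "inv H \<circ> (H \<circ> b) \<in> Gs d" unfolding IObM_def \<sigma>_def by (rule G_comp[OF G_inv[OF HG]])
    then show "IObM d b" unfolding IObM_def using injH by (simp add: o_assoc)
  qed (unfold IObM_def \<sigma>_def, rule G_comp[OF HG])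
  have i2: "PhM d (\<sigma> a) (\<sigma> b) = PhM d a b" for a b unfolding \<sigma>_def by (rule PhM_comp[OF HG])
  have i3: "WM d P (\<sigma> a) (\<sigma> b) x = WM d P a b x" for a b x
  proof -
    have "(\<sigma> a \<in> Gs d) = (a \<in> Gs d)" using i1 unfolding IObM_def .
    moreover have "P (\<sigma> b) = P b" unfolding \<sigma>_def by (rule P1[OF HG])
    moreover have "(\<sigma> a x \<in> trace d (\<sigma> b)) = (a x \<in> trace d b)"
      unfolding \<sigma>_def trace_def using injH by (auto simp: inj_eq)
    ultimately show ?thesis unfolding WM_def by simp
  qed
  have "sat (IObM d) (PhM d) (WM d P) (eB(h := k)) eQ \<phi> = sat (IObM d) (PhM d) (WM d P) (\<sigma> \<circ> (eB(h := m))) eQ \<phi>"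
    by (rule sat_free) (use fr sm in auto)
  also have "\<dots> = sat (IObM d) (PhM d) (WM d P) (eB(h := m)) eQ \<phi>"
    using sat_auto[where \<sigma>=\<sigma> and IOb="IObM d" and Ph="PhM d" and W="WM d P", OF bs i1 i2 i3] by blast
  finally show "sat (IObM d) (PhM d) (WM d P) (eB(h := m)) eQ \<phi> = sat (IObM d) (PhM d) (WM d P) (eB(h := k)) eQ \<phi>"
    by simp
qed


lemma mq_time: "mq d x y = (time x y)\<^sup>2 - space2 d x y"
  unfolding mq_def time_def by simp

definition "v11 = (1::real) # 1 # replicate (d - 2) 0"

lemma v11_len: "length v11 = d" using d unfolding v11_def by simp

lemma sp_v11: "space2 d (replicate d 0) v11 = 1"
proof -
  have "space2 d (replicate d 0) v11 = (\<Sum>i\<in>{1..<d}. if i = 1 then 1 else 0)"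
    unfolding space2_def v11_def by (intro sum.cong) (auto simp: nth_Cons')
  also have "\<dots> = 1" using d by simp
  finally show ?thesis .
qed

lemma tm_v11: "time (replicate d 0) v11 = -1"
  using d unfolding time_def v11_def by simp

lemma mq_v11: "mq d v11 (replicate d 0) = 0"
proof -
  have "mq d v11 (replicate d 0) = mq d (replicate d 0) v11" by (rule mq_sym)
  also have "\<dots> = 0" unfolding mq_time sp_v11 tm_v11 by simp
  finally show ?thesis .
qed

lemma photon_through:
  assumes "length a = d" "length b = d" "mq d b a = 0"
  shows "\<exists>p. PhM d p q \<and> P p \<and> a \<in> trace d p \<and> b \<in> trace d p"
  using line_Ph[OF d0 assms(3)] P4[OF assms] line_a[OF assms(1) d0] line_b[OF assms(1,2) d0] by blast

lemma Light: "AxLight d (IObM d) (PhM d) (WM d P)"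
  unfolding AxLight_def
proof (intro exI conjI allI impI)
  show "IObM d (\<lambda>x. x)" unfolding IObM_def by (rule G_id)
  show "(0::real) < 1" by simp
  fix x y :: "real list" assume l: "length x = d \<and> length y = d"
  show "(\<exists>p b. PhM d p b \<and> WM d P (\<lambda>x. x) p x \<and> WM d P (\<lambda>x. x) p y) = (space2 d x y = 1\<^sup>2 * (time x y)\<^sup>2)"
  proof
    assume "\<exists>p b. PhM d p b \<and> WM d P (\<lambda>x. x) p x \<and> WM d P (\<lambda>x. x) p y"
    then obtain p b where "PhM d p b" "x \<in> trace d p" "y \<in> trace d p" unfolding WM_def by auto
    then have "mq d x y = 0" using l unfolding PhM_def Ld_def by auto
    then show "space2 d x y = 1\<^sup>2 * (time x y)\<^sup>2" unfolding mq_time by simp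
  next
    assume "space2 d x y = 1\<^sup>2 * (time x y)\<^sup>2"
    then have "mq d y x = 0" using mq_sym mq_time by simp
    then obtain p where "PhM d p (\<lambda>z. z)" "P p" "x \<in> trace d p" "y \<in> trace d p"
      using photon_through[of x y "\<lambda>z. z"] l by blast
    then show "\<exists>p b. PhM d p b \<and> WM d P (\<lambda>x. x) p x \<and> WM d P (\<lambda>x. x) p y"
      unfolding WM_def using G_id by blast
  qed
qed

lemma Ev: "AxEv d (IObM d) (WM d P)"
  unfolding AxEv_def
proof (intro allI impI)
  fix m k and x :: "real list" assume a: "IObM d m \<and> IObM d k \<and> length x = d"
  then have mG: "m \<in> Gs d" and kG: "k \<in> Gs d" unfolding IObM_def by auto
  have "length (inv k (m x)) = d" using G_len[OF G_inv[OF kG]] G_len[OF mG] a by simp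
  moreover have "k (inv k (m x)) = m x" using G_bij[OF kG] by (simp add: bij_is_surj surj_f_inv_f)
  ultimately show "\<exists>y. length y = d \<and> same_ev (WM d P) m x k y"
    unfolding same_ev_def WM_def using mG kG by (intro exI[of _ "inv k (m x)"]) auto
qed

lemma Self: "AxSelf d (IObM d) (WM d P)"
  unfolding AxSelf_def
proof (intro allI impI)
  fix m and x :: "real list" assume mG: "IObM d m" and lx: "length x = d"
  have mG': "m \<in> Gs d" using mG unfolding IObM_def .
  have "WM d P m m x = (\<exists>t. x = te d t)"
    unfolding WM_def trace_def using mG' P2[OF mG'] G_inj[OF mG'] by (auto simp: inj_eq)
  also have "\<dots> = (\<forall>i\<in>{1..<d}. x ! i = 0)"
  proof
    assume "\<exists>t. x = te d t" then show "\<forall>i\<in>{1..<d}. x ! i = 0" by (auto simp: te_nth)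
  next
    assume z: "\<forall>i\<in>{1..<d}. x ! i = 0"
    have "x = te d (x!0)"
    proof (rule nth_equalityI)
      show "length x = length (te d (x!0))" using lx d0 by simp
      fix i assume "i < length x" then show "x ! i = te d (x ! 0) ! i" using z lx
        by (cases "i = 0") (auto simp: te_nth)
    qed
    then show "\<exists>t. x = te d t" by blast
  qed
  finally show "WM d P m m x = (\<forall>i\<in>{1..<d}. x ! i = 0)" .
qed

lemma SymD: "AxSymD d (IObM d) (PhM d) (WM d P)"
  unfolding AxSymD_def
proof (intro conjI allI impI)
  fix m k and x y x' y' :: "real list"
  assume a: "IObM d m \<and> IObM d k \<and> length x = d \<and> length y = d \<and> length x' = d \<and> length y' = d \<and>
       x ! 0 = y ! 0 \<and> x' ! 0 = y' ! 0 \<and> same_ev (WM d P) m x k x' \<and> same_ev (WM d P) m y k y'"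
  then have mG: "m \<in> Gs d" and kG: "k \<in> Gs d" unfolding IObM_def by auto
  have ev: "k z' = m z" if "same_ev (WM d P) m z k z'" for z z'
  proof -
    have "WM d P m (\<lambda>_. m z) z" unfolding WM_def trace_def using mG P3 by auto
    then have "WM d P k (\<lambda>_. m z) z'" using that unfolding same_ev_def by blast
    then show ?thesis unfolding WM_def trace_def by auto
  qed
  have "mq d x' y' = mq d (k x') (k y')" using a G_mq[OF kG] by simp
  also have "\<dots> = mq d (m x) (m y)" using ev[of x x'] ev[of y y'] a by simp
  also have "\<dots> = mq d x y" using a G_mq[OF mG] by simp
  finally have "mq d x' y' = mq d x y" .
  then show "space2 d x y = space2 d x' y'" using a unfolding mq_def by simp
next
  fix m assume "IObM d m"
  then have mG: "m \<in> Gs d" unfolding IObM_def .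
  have l: "length (m (replicate d 0)) = d" "length (m v11) = d" using G_len[OF mG] v11_len by auto
  have "mq d (m v11) (m (replicate d 0)) = 0" using G_mq[OF mG] v11_len mq_v11 by simp
  then obtain p where "PhM d p (\<lambda>z. z)" "P p" "m (replicate d 0) \<in> trace d p" "m v11 \<in> trace d p"
    using photon_through[OF l, of "\<lambda>z. z"] by blast
  then show "\<exists>p b. PhM d p b \<and> WM d P m p (replicate d 0) \<and> WM d P m p (1 # 1 # replicate (d - 2) 0)"
    unfolding WM_def v11_def[symmetric] using mG by blast
qed

lemma cof: assumes mG: "m \<in> Gs d" shows "c_of d (PhM d) (WM d P) m = 1"
  unfolding c_of_def
proof (rule the_equality)
  show "is_c d (PhM d) (WM d P) m 1"
    unfolding is_c_def
  proof (intro conjI allI impI)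
    fix x y :: "real list" assume l: "length x = d \<and> length y = d"
      and "\<exists>p b. PhM d p b \<and> WM d P m p x \<and> WM d P m p y"
    then obtain p b where "PhM d p b" "m x \<in> trace d p" "m y \<in> trace d p" unfolding WM_def by auto
    then have "mq d (m x) (m y) = 0" using l G_len[OF mG] unfolding PhM_def Ld_def by auto
    then have "mq d x y = 0" using G_mq[OF mG] l by simp
    then show "space2 d x y = 1\<^sup>2 * (time x y)\<^sup>2" unfolding mq_time by simp
  qed simp
next
  fix v assume iv: "is_c d (PhM d) (WM d P) m v"
  have "IObM d m" using mG unfolding IObM_def .
  then obtain p b where "PhM d p b \<and> WM d P m p (replicate d 0) \<and> WM d P m p v11"
    using SymD unfolding AxSymD_def v11_def by blast
  then have "space2 d (replicate d 0) v11 = v\<^sup>2 * (time (replicate d 0) v11)\<^sup>2"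
    using iv v11_len length_replicate[of d "0::real"] unfolding is_c_def by blast
  then have "v\<^sup>2 = 1" using sp_v11 tm_v11 by simp
  moreover have "v > 0" using iv unfolding is_c_def by simp
  ultimately show "v = 1" by (smt (verit) power2_eq_square mult_less_cancel_right1 mult_le_cancel_right1)
qed

lemma ThExp: "AxThExp d (IObM d) (PhM d) (WM d P)"
  unfolding AxThExp_def
proof (intro conjI allI impI)
  show "\<exists>h. IObM d h" unfolding IObM_def using G_id by blast
  fix m and x y :: "real list" assume a: "IObM d m \<and> length x = d \<and> length y = d \<and>
    space2 d x y < (c_of d (PhM d) (WM d P) m)\<^sup>2 * (time x y)\<^sup>2"
  then have mG: "m \<in> Gs d" unfolding IObM_def by auto
  have "mq d x y > 0" using a cof[OF mG] unfolding mq_time by simp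
  then have "mq d (m y) (m x) > 0" using G_mq[OF mG] a mq_sym by metis
  then obtain k where "k \<in> Gs d" "m x \<in> trace d k" "m y \<in> trace d k"
    using thexp_obs[OF d0] G_len[OF mG] a by blast
  then show "\<exists>k. IObM d k \<and> WM d P m k x \<and> WM d P m k y"
    unfolding IObM_def WM_def using mG P2 by blast
qed

lemma SR: "SR d (IObM d) (PhM d) (WM d P)"
  unfolding SR_def using SPR Light Ev Self SymD by blast

end

theorem theorem4p2:
  fixes d :: nat
  assumes "d \<ge> 2"
  shows "(\<exists>(IOb :: (real list \<Rightarrow> real list) \<Rightarrow> bool) Ph W.
            SR d IOb Ph W \<and> AxThExp d IOb Ph W \<and> ExFTLBody d IOb Ph W)
       \<and> (\<exists>(IOb :: (real list \<Rightarrow> real list) \<Rightarrow> bool) Ph W.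
            SR d IOb Ph W \<and> AxThExp d IOb Ph W \<and> \<not> ExFTLBody d IOb Ph W)"
proof
  have d0: "0 < d" using assms by simp
  interpret M1: mdl d "\<lambda>_. True" by unfold_locales (use assms in auto)
  interpret M2: mdl d "Caus d"
  proof unfold_locales
    show "2 \<le> d" by (rule assms)
    show "\<And>H b. H \<in> Gs d \<Longrightarrow> Caus d (H \<circ> b) = Caus d b" by (rule Caus_comp)
    show "\<And>g. g \<in> Gs d \<Longrightarrow> Caus d g" using G_Caus d0 by blast
    show "\<And>c. Caus d (\<lambda>_. c)" by (rule const_Caus)
    show "\<And>a b. length a = d \<Longrightarrow> length b = d \<Longrightarrow> mq d b a = 0 \<Longrightarrow> Caus d (line d a b)"
      using line_Caus d0 by blast
  qed
  have ftl: "ExFTLBody d (IObM d) (PhM d) (WM d (\<lambda>_. True))"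
    unfolding ExFTLBody_def
  proof (intro exI conjI)
    define b where "b = (\<lambda>z::real list. vec d (\<lambda>i. if i = 1 then z!0 else 0))"
    show "IObM d (\<lambda>x. x)" unfolding IObM_def by (rule G_id)
    show "length (b (te d 0)) = d" "length (b (te d 1)) = d" unfolding b_def by simp_all
    show "WM d (\<lambda>_. True) (\<lambda>x. x) b (b (te d 0))" "WM d (\<lambda>_. True) (\<lambda>x. x) b (b (te d 1))"
      unfolding WM_def trace_def using G_id by auto
    have "space2 d (b (te d 0)) (b (te d 1)) = (\<Sum>i\<in>{1..<d}. if i = 1 then 1 else 0)"
      unfolding space2_def b_def by (intro sum.cong) auto
    also have "\<dots> = 1" using assms by simp
    finally have sp: "space2 d (b (te d 0)) (b (te d 1)) = 1" .
    have tm: "time (b (te d 0)) (b (te d 1)) = 0" unfolding time_def b_def using d0 by simp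
    show "(c_of d (PhM d) (WM d (\<lambda>_. True)) (\<lambda>x. x))\<^sup>2 * (time (b (te d 0)) (b (te d 1)))\<^sup>2
          < space2 d (b (te d 0)) (b (te d 1))" unfolding sp tm by simp
  qed
  show "\<exists>(IOb :: (real list \<Rightarrow> real list) \<Rightarrow> bool) Ph W.
            SR d IOb Ph W \<and> AxThExp d IOb Ph W \<and> ExFTLBody d IOb Ph W"
    using M1.SR M1.ThExp ftl by blast
  have nftl: "\<not> ExFTLBody d (IObM d) (PhM d) (WM d (Caus d))"
    unfolding ExFTLBody_def
  proof
    assume "\<exists>m b x y. IObM d m \<and> length x = d \<and> length y = d \<and> WM d (Caus d) m b x \<and> WM d (Caus d) m b y \<and>
        (c_of d (PhM d) (WM d (Caus d)) m)\<^sup>2 * (time x y)\<^sup>2 < space2 d x y"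
    then obtain m b and x y :: "real list" where
      a: "IObM d m" "length x = d" "length y = d" "WM d (Caus d) m b x" "WM d (Caus d) m b y"
      and gt: "(c_of d (PhM d) (WM d (Caus d)) m)\<^sup>2 * (time x y)\<^sup>2 < space2 d x y" by blast
    have mG: "m \<in> Gs d" using a(1) unfolding IObM_def by simp
    have "Caus d b" "m x \<in> trace d b" "m y \<in> trace d b" using a unfolding WM_def by auto
    then have "0 \<le> mq d (m x) (m y)" using G_len[OF mG] a unfolding Caus_def Ld_def by auto
    then have "0 \<le> mq d x y" using G_mq[OF mG] a by simp
    then show False using gt M2.cof[OF mG] unfolding M2.mq_time by simp
  qed
  show "\<exists>(IOb :: (real list \<Rightarrow> real list) \<Rightarrow> bool) Ph W.
            SR d IOb Ph W \<and> AxThExp d IOb Ph W \<and> \<not> ExFTLBody d IOb Ph W"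
    using M2.SR M2.ThExp nftl by blast
qed

end
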